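(* Let $p:\mathcal{Q}\to\mathcal{C}$ be a functor of categories. If $p$ is ULF, then the functor of operads $\mathcal{W}(p):\mathcal{W}(\mathcal{Q})\to\mathcal{W}(\mathcal{C})$ is ULF; and if $p$ is finitary, then $\mathcal{W}(p)$ is finitary.
   Context: Composition in categories is written diagrammatically. Operads are colored (non-symmetric) operads/multicategories: operations $f:A_1,\dots,A_n\to A$ with partial compositions $g\circ_i h$ (plugging $h$ into the $i$-th input of $g$) and identities. For a category $\mathcal{C}$, the operad of spliced arrows $\mathcal{W}(\mathcal{C})$ has as colors pairs $(A,B)$ of objects of $\mathcal{C}$; an $n$-ary operation $(A_1,B_1),\dots,(A_n,B_n)\to(A,B)$ is a sequence $w_0\text{-}w_1\text{-}\cdots\text{-}w_n$ of arrows $w_0:A\to A_1$, $w_i:B_i\to A_{i+1}$ for $1\le i<n$, and $w_n:B_n\to B$ (for $n=0$, a single arrow $w_0:A\to B$, so constants of color $(A,B)$ are arrows $A\to B$). Partial composition is $(w_0\text{-}\cdots\text{-}w_n)\circ_i(u_0\text{-}\cdots\text{-}u_m)=w_0\text{-}\cdots\text{-}w_{i-2}\text{-}(w_{i-1}u_0)\text{-}u_1\text{-}\cdots\text{-}u_{m-1}\text{-}(u_m w_i)\text{-}w_{i+1}\text{-}\cdots\text{-}w_n$, and the identity on $(A,B)$ is $\mathrm{id}_A\text{-}\mathrm{id}_B$. For a functor $p$, $\mathcal{W}(p)$ sends $(q,q')\mapsto(p(q),p(q'))$ and $w_0\text{-}\cdots\text{-}w_n\mapsto p(w_0)\text{-}\cdots\text{-}p(w_n)$.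 A functor of categories $p$ is ULF if for every arrow $\alpha$ and arrows $u,v$ with $p(\alpha)=uv$ there is a unique pair $\beta,\gamma$ with $\alpha=\beta\gamma$, $p(\beta)=u$, $p(\gamma)=v$. A functor of operads $p:\mathcal{D}\to\mathcal{O}$ is ULF if for every operation $\alpha$ of $\mathcal{D}$ and operations $g,h$ of $\mathcal{O}$ and index $i$ with $p(\alpha)=g\circ_i h$ there is a unique pair of operations $\beta,\gamma$ of $\mathcal{D}$ with $\alpha=\beta\circ_i\gamma$, $p(\beta)=g$, $p(\gamma)=h$. A functor (of categories or operads) is finitary if the fiber over each object/color and the fiber over each arrow/operation is finite. *)

theory Defs
  imports Main
begin

record ('o,'a) cat =
  Ob   :: "'o set"
  Ar   :: "'a set"
  dom  :: "'a \<Rightarrow> 'o"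
  cod  :: "'a \<Rightarrow> 'o"
  comp :: "'a \<Rightarrow> 'a \<Rightarrow> 'a"   (* comp C f g = f g : first f, then g; needs cod f = dom g *)
  ide  :: "'o \<Rightarrow> 'a"

definition category :: "('o,'a) cat \<Rightarrow> bool" where
  "category C \<longleftrightarrow>
     (\<forall>f\<in>Ar C. dom C f \<in> Ob C \<and> cod C f \<in> Ob C) \<and>
     (\<forall>f\<in>Ar C. \<forall>g\<in>Ar C. cod C f = dom C g \<longrightarrow>
        comp C f g \<in> Ar C \<and> dom C (comp C f g) = dom C f \<and> cod C (comp C f g) = cod C g) \<and>
     (\<forall>f\<in>Ar C. \<forall>g\<in>Ar C. \<forall>h\<in>Ar C. cod C f = dom C g \<longrightarrow> cod C g = dom C h \<longrightarrow>
        comp C (comp C f g) h = comp C f (comp C g h)) \<and>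
     (\<forall>A\<in>Ob C. ide C A \<in> Ar C \<and> dom C (ide C A) = A \<and> cod C (ide C A) = A) \<and>
     (\<forall>f\<in>Ar C. comp C (ide C (dom C f)) f = f \<and> comp C f (ide C (cod C f)) = f)"

definition is_functor :: "('o1,'a1) cat \<Rightarrow> ('o2,'a2) cat \<Rightarrow> ('o1 \<Rightarrow> 'o2) \<Rightarrow> ('a1 \<Rightarrow> 'a2) \<Rightarrow> bool" where
  "is_functor Q C pO pA \<longleftrightarrow> category Q \<and> category C \<and>
     (\<forall>A\<in>Ob Q. pO A \<in> Ob C) \<and>
     (\<forall>f\<in>Ar Q. pA f \<in> Ar C \<and> dom C (pA f) = pO (dom Q f) \<and> cod C (pA f) = pO (cod Q f)) \<and>
     (\<forall>f\<in>Ar Q. \<forall>g\<in>Ar Q. cod Q f = dom Q g \<longrightarrow> pA (comp Q f g) = comp C (pA f) (pA g)) \<and>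
     (\<forall>A\<in>Ob Q. pA (ide Q A) = ide C (pO A))"

definition functor_ULF :: "('o1,'a1) cat \<Rightarrow> ('o2,'a2) cat \<Rightarrow> ('a1 \<Rightarrow> 'a2) \<Rightarrow> bool" where
  "functor_ULF Q C pA \<longleftrightarrow>
     (\<forall>\<alpha>\<in>Ar Q. \<forall>u\<in>Ar C. \<forall>v\<in>Ar C. cod C u = dom C v \<longrightarrow> pA \<alpha> = comp C u v \<longrightarrow>
        (\<exists>!(\<beta>,\<gamma>). \<beta> \<in> Ar Q \<and> \<gamma> \<in> Ar Q \<and> cod Q \<beta> = dom Q \<gamma> \<and>
                  \<alpha> = comp Q \<beta> \<gamma> \<and> pA \<beta> = u \<and> pA \<gamma> = v))"

definition functor_finitary :: "('o1,'a1) cat \<Rightarrow> ('o2,'a2) cat \<Rightarrow> ('o1 \<Rightarrow> 'o2) \<Rightarrow> ('a1 \<Rightarrow> 'a2) \<Rightarrow> bool" where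
  "functor_finitary Q C pO pA \<longleftrightarrow>
     (\<forall>X\<in>Ob C. finite {Y\<in>Ob Q. pO Y = X}) \<and>
     (\<forall>f\<in>Ar C. finite {g\<in>Ar Q. pA g = f})"

text \<open>An operation o has list of input colors ins o (length = arity) and output color out o.
  pcomp g i h is the partial composition g \<circ>_i h, with inputs indexed 1..n.\<close>
record ('c,'op) operad =
  Col   :: "'c set"
  Ops   :: "'op set"
  ins   :: "'op \<Rightarrow> 'c list"
  out   :: "'op \<Rightarrow> 'c"
  pcomp :: "'op \<Rightarrow> nat \<Rightarrow> 'op \<Rightarrow> 'op"
  oid   :: "'c \<Rightarrow> 'op"

definition composable :: "('c,'op) operad \<Rightarrow> 'op \<Rightarrow> nat \<Rightarrow> 'op \<Rightarrow> bool" where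
  "composable P g i h \<longleftrightarrow> g \<in> Ops P \<and> h \<in> Ops P \<and> 1 \<le> i \<and> i \<le> length (ins P g) \<and>
     ins P g ! (i - 1) = out P h"

definition operad_functor_ULF ::
  "('c1,'op1) operad \<Rightarrow> ('c2,'op2) operad \<Rightarrow> ('op1 \<Rightarrow> 'op2) \<Rightarrow> bool" where
  "operad_functor_ULF D P pOp \<longleftrightarrow>
     (\<forall>\<alpha>\<in>Ops D. \<forall>g h i. composable P g i h \<longrightarrow> pOp \<alpha> = pcomp P g i h \<longrightarrow>
        (\<exists>!(\<beta>,\<gamma>). composable D \<beta> i \<gamma> \<and> \<alpha> = pcomp D \<beta> i \<gamma> \<and> pOp \<beta> = g \<and> pOp \<gamma> = h))"

definition operad_functor_finitary ::
  "('c1,'op1) operad \<Rightarrow> ('c2,'op2) operad \<Rightarrow> ('c1 \<Rightarrow> 'c2) \<Rightarrow> ('op1 \<Rightarrow> 'op2) \<Rightarrow> bool" where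
  "operad_functor_finitary D P pC pOp \<longleftrightarrow>
     (\<forall>c\<in>Col P. finite {d\<in>Col D. pC d = c}) \<and>
     (\<forall>y\<in>Ops P. finite {x\<in>Ops D. pOp x = y})"

text \<open>An n-ary operation w0-w1-...-wn is the nonempty list [w0,...,wn] of arrows;
  its i-th input color (1 \<le> i \<le> n) is (cod w_{i-1}, dom w_i), its output color (dom w0, cod wn).\<close>
definition splice_comp :: "('o,'a) cat \<Rightarrow> 'a list \<Rightarrow> nat \<Rightarrow> 'a list \<Rightarrow> 'a list" where
  "splice_comp C w i u =
     take (i - 1) w @
     (if length u = 1 then [comp C (comp C (w ! (i - 1)) (hd u)) (w ! i)]
      else [comp C (w ! (i - 1)) (hd u)] @ butlast (tl u) @ [comp C (last u) (w ! i)]) @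
     drop (i + 1) w"

definition W :: "('o,'a) cat \<Rightarrow> ('o \<times> 'o, 'a list) operad" where
  "W C = \<lparr> Col = Ob C \<times> Ob C,
           Ops = {w. w \<noteq> [] \<and> set w \<subseteq> Ar C},
           ins = (\<lambda>w. map (\<lambda>j. (cod C (w ! j), dom C (w ! (Suc j)))) [0..<length w - 1]),
           out = (\<lambda>w. (dom C (hd w), cod C (last w))),
           pcomp = splice_comp C,
           oid = (\<lambda>(A,B). [ide C A, ide C B]) \<rparr>"

definition W_col :: "('o1 \<Rightarrow> 'o2) \<Rightarrow> 'o1 \<times> 'o1 \<Rightarrow> 'o2 \<times> 'o2" where
  "W_col pO = (\<lambda>(q,q'). (pO q, pO q'))"

definition W_op :: "('a1 \<Rightarrow> 'a2) \<Rightarrow> 'a1 list \<Rightarrow> 'a2 list" where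
  "W_op pA = map pA"

end

theory Submission
  imports Defs
begin

lemma ins_W: "j < length w - 1 \<Longrightarrow> ins (W C) w ! j = (cod C (w!j), dom C (w ! Suc j))"
  by (simp add: W_def)

lemma composable_W_iff:
  "composable (W C) (G1 @ x # y # G3) (Suc (length G1)) h \<longleftrightarrow>
     set (G1 @ x # y # G3) \<subseteq> Ar C \<and> h \<noteq> [] \<and> set h \<subseteq> Ar C \<and>
     cod C x = dom C (hd h) \<and> dom C y = cod C (last h)"
proof -
  have "ins (W C) (G1 @ x # y # G3) ! length G1 = (cod C x, dom C y)"
    by (subst ins_W) (auto simp: nth_append)
  moreover have "length (ins (W C) (G1 @ x # y # G3)) = Suc (Suc (length G1 + length G3)) - 1"
    by (simp add: W_def)
  ultimately show ?thesis
    by (auto simp: composable_def W_def)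
qed

lemma splice1:
  "splice_comp C (G1 @ x # y # G3) (Suc (length G1)) [u] = G1 @ [comp C (comp C x u) y] @ G3"
  by (simp add: splice_comp_def nth_append)

lemma splice2:
  "splice_comp C (G1 @ x # y # G3) (Suc (length G1)) (u # U @ [v]) =
     G1 @ [comp C x u] @ U @ [comp C v y] @ G3"
  by (simp add: splice_comp_def nth_append)

lemma cat_comp:
  "category C \<Longrightarrow> f\<in>Ar C \<Longrightarrow> g\<in>Ar C \<Longrightarrow> cod C f = dom C g \<Longrightarrow>
     comp C f g \<in> Ar C \<and> dom C (comp C f g) = dom C f \<and> cod C (comp C f g) = cod C g"
  by (simp add: category_def)

lemma fun_comp:
  "is_functor Q C pO pA \<Longrightarrow> f\<in>Ar Q \<Longrightarrow> g\<in>Ar Q \<Longrightarrow> cod Q f = dom Q g \<Longrightarrow>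
     pA (comp Q f g) = comp C (pA f) (pA g)"
  by (simp add: is_functor_def)

lemma fun_ar:
  "is_functor Q C pO pA \<Longrightarrow> f\<in>Ar Q \<Longrightarrow> pA f \<in> Ar C"
  by (simp add: is_functor_def)

lemma ulf_ex:
  assumes "functor_ULF Q C pA" "a \<in> Ar Q" "u\<in>Ar C" "v\<in>Ar C" "cod C u = dom C v" "pA a = comp C u v"
  obtains b c where "b\<in>Ar Q" "c\<in>Ar Q" "cod Q b = dom Q c" "a = comp Q b c" "pA b = u" "pA c = v"
proof -
  have "\<exists>!(b,c). b \<in> Ar Q \<and> c \<in> Ar Q \<and> cod Q b = dom Q c \<and> a = comp Q b c \<and> pA b = u \<and> pA c = v"
    using assms unfolding functor_ULF_def by blast
  then show ?thesis using that by blast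
qed

lemma ulf_un:
  assumes "functor_ULF Q C pA" "a \<in> Ar Q" "u\<in>Ar C" "v\<in>Ar C" "cod C u = dom C v" "pA a = comp C u v"
    "b\<in>Ar Q" "c\<in>Ar Q" "cod Q b = dom Q c" "a = comp Q b c" "pA b = u" "pA c = v"
    "b'\<in>Ar Q" "c'\<in>Ar Q" "cod Q b' = dom Q c'" "a = comp Q b' c'" "pA b' = u" "pA c' = v"
  shows "b = b' \<and> c = c'"
proof -
  have "\<exists>!(b,c). b \<in> Ar Q \<and> c \<in> Ar Q \<and> cod Q b = dom Q c \<and> a = comp Q b c \<and> pA b = u \<and> pA c = v"
    using assms(1-6) unfolding functor_ULF_def by blast
  then show ?thesis using assms(7-18) by blast
qed


lemma core1:
  assumes F: "is_functor Q C pO pA" and U: "functor_ULF Q C pA"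
    and \<alpha>: "set \<alpha> \<subseteq> Ar Q"
    and xA: "x \<in> Ar C" "y \<in> Ar C" "u \<in> Ar C" "set G1 \<subseteq> Ar C" "set G3 \<subseteq> Ar C"
    and cx: "cod C x = dom C u" and cy: "dom C y = cod C u"
    and eq: "map pA \<alpha> = G1 @ [comp C (comp C x u) y] @ G3"
  shows "\<exists>!(\<beta>,\<gamma>). composable (W Q) \<beta> (Suc (length G1)) \<gamma> \<and>
           \<alpha> = splice_comp Q \<beta> (Suc (length G1)) \<gamma> \<and> map pA \<beta> = G1 @ x # y # G3 \<and> map pA \<gamma> = [u]"
proof -
  have cQ: "category Q" and cC: "category C" using F by (auto simp: is_functor_def)
  obtain A1 a A3 where \<alpha>eq: "\<alpha> = A1 @ [a] @ A3" and mA1: "map pA A1 = G1"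
    and pa: "pA a = comp C (comp C x u) y" and mA3: "map pA A3 = G3"
    using eq by (auto simp: map_eq_append_conv map_eq_Cons_conv)
  have aA: "a \<in> Ar Q" "set A1 \<subseteq> Ar Q" "set A3 \<subseteq> Ar Q" using \<alpha> \<alpha>eq by auto
  have xu: "comp C x u \<in> Ar C" "cod C (comp C x u) = dom C y"
    using cat_comp[OF cC xA(1) xA(3) cx] cy by auto
  obtain a' y' where a': "a' \<in> Ar Q" "y' \<in> Ar Q" "cod Q a' = dom Q y'" "a = comp Q a' y'"
     "pA a' = comp C x u" "pA y' = y"
    using ulf_ex[OF U aA(1) xu(1) xA(2) xu(2) pa] by blast
  obtain x' u' where x': "x' \<in> Ar Q" "u' \<in> Ar Q" "cod Q x' = dom Q u'" "a' = comp Q x' u'"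
     "pA x' = x" "pA u' = u"
    using ulf_ex[OF U a'(1) xA(1) xA(3) cx a'(5)] by blast
  have cu': "cod Q u' = dom Q y'" using cat_comp[OF cQ x'(1) x'(2) x'(3)] a'(3) x'(4) by auto
  define \<beta> where "\<beta> = A1 @ [x',y'] @ A3"
  define \<gamma> where "\<gamma> = [u']"
  have lA1: "length A1 = length G1" using mA1 by auto
  show ?thesis
  proof (rule ex1I[of _ "(\<beta>,\<gamma>)"])
    show "case (\<beta>,\<gamma>) of (\<beta>,\<gamma>) \<Rightarrow> composable (W Q) \<beta> (Suc (length G1)) \<gamma> \<and>
           \<alpha> = splice_comp Q \<beta> (Suc (length G1)) \<gamma> \<and> map pA \<beta> = G1 @ x # y # G3 \<and> map pA \<gamma> = [u]"
      unfolding \<beta>_def \<gamma>_def using aA a' x' cu' mA1 mA3 lA1[symmetric]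
      by (simp add: composable_W_iff splice1 \<alpha>eq)
  next
    fix p assume p: "case p of (\<beta>,\<gamma>) \<Rightarrow> composable (W Q) \<beta> (Suc (length G1)) \<gamma> \<and>
           \<alpha> = splice_comp Q \<beta> (Suc (length G1)) \<gamma> \<and> map pA \<beta> = G1 @ x # y # G3 \<and> map pA \<gamma> = [u]"
    obtain \<beta>2 \<gamma>2 where p2: "p = (\<beta>2,\<gamma>2)" by (cases p)
    have c2: "composable (W Q) \<beta>2 (Suc (length G1)) \<gamma>2" and s2: "\<alpha> = splice_comp Q \<beta>2 (Suc (length G1)) \<gamma>2"
      and m\<beta>: "map pA \<beta>2 = G1 @ x # y # G3" and m\<gamma>: "map pA \<gamma>2 = [u]" using p p2 by auto
    obtain B1 x2 y2 B3 where \<beta>2: "\<beta>2 = B1 @ [x2,y2] @ B3" "map pA B1 = G1" "pA x2 = x" "pA y2 = y"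
      "map pA B3 = G3"
      using m\<beta> by (auto simp: map_eq_append_conv map_eq_Cons_conv)
    obtain u2 where \<gamma>2: "\<gamma>2 = [u2]" "pA u2 = u" using m\<gamma> by (auto simp: map_eq_Cons_conv)
    have lB1: "length B1 = length G1" using \<beta>2 by auto
    have c2': "set \<beta>2 \<subseteq> Ar Q" "u2 \<in> Ar Q" "cod Q x2 = dom Q u2" "dom Q y2 = cod Q u2"
      using c2 \<beta>2(1) \<gamma>2(1) lB1 composable_W_iff[of Q B1 x2 y2 B3 \<gamma>2] by auto
    have x2A: "x2 \<in> Ar Q" "y2 \<in> Ar Q" using c2' \<beta>2 by auto
    have "A1 @ [a] @ A3 = B1 @ [comp Q (comp Q x2 u2) y2] @ B3"
      using s2 \<alpha>eq \<beta>2(1) \<gamma>2(1) lB1 splice1[of Q B1 x2 y2 B3 u2] by simp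
    then have e: "A1 = B1" "a = comp Q (comp Q x2 u2) y2" "A3 = B3" using lA1 lB1 by auto
    have xu2: "comp Q x2 u2 \<in> Ar Q" "cod Q (comp Q x2 u2) = dom Q y2"
      using cat_comp[OF cQ x2A(1) c2'(2) c2'(3)] c2'(4) by auto
    have pxu2: "pA (comp Q x2 u2) = comp C x u"
      using fun_comp[OF F x2A(1) c2'(2) c2'(3)] \<beta>2 \<gamma>2 by simp
    have 1: "a' = comp Q x2 u2 \<and> y' = y2"
      using ulf_un[OF U aA(1) xu(1) xA(2) xu(2) pa a'(1,2,3,4,5,6) xu2(1) x2A(2) xu2(2) e(2) pxu2 \<beta>2(4)] .
    have 2: "x' = x2 \<and> u' = u2"
      using ulf_un[OF U a'(1) xA(1) xA(3) cx a'(5) x'(1-6) x2A(1) c2'(2) c2'(3)] 1 \<beta>2(3) \<gamma>2(2) by blast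
    show "p = (\<beta>,\<gamma>)" using p2 \<beta>2(1) \<gamma>2(1) e 1 2 \<beta>_def \<gamma>_def by simp
  qed
qed


lemma core2:
  assumes F: "is_functor Q C pO pA" and U: "functor_ULF Q C pA"
    and \<alpha>: "set \<alpha> \<subseteq> Ar Q"
    and xA: "x \<in> Ar C" "y \<in> Ar C" "u \<in> Ar C" "v \<in> Ar C" "set G1 \<subseteq> Ar C" "set G3 \<subseteq> Ar C"
      "set UU \<subseteq> Ar C"
    and cx: "cod C x = dom C u" and cy: "dom C y = cod C v"
    and eq: "map pA \<alpha> = G1 @ [comp C x u] @ UU @ [comp C v y] @ G3"
  shows "\<exists>!(\<beta>,\<gamma>). composable (W Q) \<beta> (Suc (length G1)) \<gamma> \<and>
           \<alpha> = splice_comp Q \<beta> (Suc (length G1)) \<gamma> \<and> map pA \<beta> = G1 @ x # y # G3 \<and>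
           map pA \<gamma> = u # UU @ [v]"
proof -
  have cQ: "category Q" and cC: "category C" using F by (auto simp: is_functor_def)
  obtain A1 a AU b A3 where \<alpha>eq: "\<alpha> = A1 @ [a] @ AU @ [b] @ A3" and mA1: "map pA A1 = G1"
    and pa: "pA a = comp C x u" and mAU: "map pA AU = UU" and pb: "pA b = comp C v y"
    and mA3: "map pA A3 = G3"
  proof -
    obtain A1 r where 1: "\<alpha> = A1 @ r" "map pA A1 = G1" "map pA r = [comp C x u] @ UU @ [comp C v y] @ G3"
      using eq by (auto simp: map_eq_append_conv)
    obtain a r2 where 2: "r = a # r2" "pA a = comp C x u" "map pA r2 = UU @ [comp C v y] @ G3"
      using 1(3) by (auto simp: map_eq_Cons_conv)
    obtain AU r3 where 3: "r2 = AU @ r3" "map pA AU = UU" "map pA r3 = [comp C v y] @ G3"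
      using 2(3) by (auto simp: map_eq_append_conv)
    obtain b A3 where 4: "r3 = b # A3" "pA b = comp C v y" "map pA A3 = G3"
      using 3(3) by (auto simp: map_eq_Cons_conv)
    show ?thesis using that 1 2 3 4 by simp
  qed
  have aA: "a \<in> Ar Q" "b \<in> Ar Q" "set A1 \<subseteq> Ar Q" "set A3 \<subseteq> Ar Q" "set AU \<subseteq> Ar Q"
    using \<alpha> \<alpha>eq by auto
  obtain x' u' where x': "x' \<in> Ar Q" "u' \<in> Ar Q" "cod Q x' = dom Q u'" "a = comp Q x' u'"
     "pA x' = x" "pA u' = u"
    using ulf_ex[OF U aA(1) xA(1) xA(3) cx pa] by blast
  obtain v' y' where v': "v' \<in> Ar Q" "y' \<in> Ar Q" "cod Q v' = dom Q y'" "b = comp Q v' y'"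
     "pA v' = v" "pA y' = y"
    using ulf_ex[OF U aA(2) xA(4) xA(2) cy[symmetric] pb] by blast
  define \<beta> where "\<beta> = A1 @ [x',y'] @ A3"
  define \<gamma> where "\<gamma> = u' # AU @ [v']"
  have lA1: "length A1 = length G1" using mA1 by auto
  have lAU: "length AU = length UU" using mAU by auto
  show ?thesis
  proof (rule ex1I[of _ "(\<beta>,\<gamma>)"])
    show "case (\<beta>,\<gamma>) of (\<beta>,\<gamma>) \<Rightarrow> composable (W Q) \<beta> (Suc (length G1)) \<gamma> \<and>
           \<alpha> = splice_comp Q \<beta> (Suc (length G1)) \<gamma> \<and> map pA \<beta> = G1 @ x # y # G3 \<and>
           map pA \<gamma> = u # UU @ [v]"
      unfolding \<beta>_def \<gamma>_def using aA x' v' mA1 mA3 mAU lA1[symmetric]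
      by (simp add: composable_W_iff splice2 \<alpha>eq)
  next
    fix p assume p: "case p of (\<beta>,\<gamma>) \<Rightarrow> composable (W Q) \<beta> (Suc (length G1)) \<gamma> \<and>
           \<alpha> = splice_comp Q \<beta> (Suc (length G1)) \<gamma> \<and> map pA \<beta> = G1 @ x # y # G3 \<and>
           map pA \<gamma> = u # UU @ [v]"
    obtain \<beta>2 \<gamma>2 where p2: "p = (\<beta>2,\<gamma>2)" by (cases p)
    have c2: "composable (W Q) \<beta>2 (Suc (length G1)) \<gamma>2" and s2: "\<alpha> = splice_comp Q \<beta>2 (Suc (length G1)) \<gamma>2"
      and m\<beta>: "map pA \<beta>2 = G1 @ x # y # G3" and m\<gamma>: "map pA \<gamma>2 = u # UU @ [v]" using p p2 by auto
    obtain B1 x2 y2 B3 where \<beta>2: "\<beta>2 = B1 @ x2 # y2 # B3" "map pA B1 = G1" "pA x2 = x" "pA y2 = y"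
      "map pA B3 = G3"
      using m\<beta> by (auto simp: map_eq_append_conv map_eq_Cons_conv)
    obtain u2 C2 v2 where \<gamma>2: "\<gamma>2 = u2 # C2 @ [v2]" "pA u2 = u" "map pA C2 = UU" "pA v2 = v"
      using m\<gamma> by (auto simp: map_eq_append_conv map_eq_Cons_conv)
    have lB1: "length B1 = length G1" using \<beta>2 by auto
    have lC2: "length C2 = length UU" using \<gamma>2 by auto
    have c2': "set \<beta>2 \<subseteq> Ar Q" "u2 \<in> Ar Q" "v2 \<in> Ar Q" "cod Q x2 = dom Q u2" "dom Q y2 = cod Q v2"
      using c2 \<beta>2(1) \<gamma>2(1) lB1 composable_W_iff[of Q B1 x2 y2 B3 \<gamma>2] by auto
    have x2A: "x2 \<in> Ar Q" "y2 \<in> Ar Q" using c2' \<beta>2 by auto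
    have "A1 @ [a] @ AU @ [b] @ A3 = B1 @ [comp Q x2 u2] @ C2 @ [comp Q v2 y2] @ B3"
      using s2 \<alpha>eq \<beta>2(1) \<gamma>2(1) lB1 splice2[of Q B1 x2 y2 B3 u2 C2 v2] by simp
    then have e: "A1 = B1" "a = comp Q x2 u2" "AU = C2" "b = comp Q v2 y2" "A3 = B3"
      using lA1 lB1 lAU lC2 by auto
    have pxu2: "pA (comp Q x2 u2) = comp C x u"
      using fun_comp[OF F x2A(1) c2'(2) c2'(4)] \<beta>2 \<gamma>2 by simp
    have pvy2: "pA (comp Q v2 y2) = comp C v y"
      using fun_comp[OF F c2'(3) x2A(2) c2'(5)[symmetric]] \<beta>2 \<gamma>2 by simp
    have 1: "x' = x2 \<and> u' = u2"
      using ulf_un[OF U aA(1) xA(1) xA(3) cx pa x'(1-6) x2A(1) c2'(2) c2'(4) e(2)] \<beta>2(3) \<gamma>2(2) by blast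
    have 2: "v' = v2 \<and> y' = y2"
      using ulf_un[OF U aA(2) xA(4) xA(2) cy[symmetric] pb v'(1-6) c2'(3) x2A(2) c2'(5)[symmetric] e(4)]
        \<beta>2(4) \<gamma>2(4) by blast
    show "p = (\<beta>,\<gamma>)" using p2 \<beta>2(1) \<gamma>2(1) e 1 2 \<beta>_def \<gamma>_def by simp
  qed
qed


lemma ulf_part:
  assumes F: "is_functor Q C pO pA" and U: "functor_ULF Q C pA"
  shows "operad_functor_ULF (W Q) (W C) (W_op pA)"
  unfolding operad_functor_ULF_def
proof (intro ballI allI impI)
  fix \<alpha> g h i
  assume \<alpha>: "\<alpha> \<in> Ops (W Q)" and c: "composable (W C) g i h"
    and e: "W_op pA \<alpha> = pcomp (W C) g i h"
  have \<alpha>s: "set \<alpha> \<subseteq> Ar Q" using \<alpha> by (simp add: W_def)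
  have e': "map pA \<alpha> = splice_comp C g i h" using e by (simp add: W_def W_op_def)
  have il: "1 \<le> i" "i < length g" using c by (auto simp: composable_def W_def)
  define G1 where "G1 = take (i-1) g"
  define G3 where "G3 = drop (Suc i) g"
  have lG1: "length G1 = i - 1" using il by (simp add: G1_def)
  have geq: "g = G1 @ g!(i-1) # g!i # G3"
  proof -
    have "g = take (i-1) g @ g!(i-1) # drop (Suc (i-1)) g"
      using il id_take_nth_drop[of "i-1" g] by simp
    moreover have "drop (Suc (i-1)) g = g!i # drop (Suc i) g"
      using il by (simp add: Cons_nth_drop_Suc)
    ultimately show ?thesis by (simp add: G1_def G3_def)
  qed
  define x where "x = g!(i-1)"
  define y where "y = g!i"
  have ii: "i = Suc (length G1)" using lG1 il by simp
  have geq': "g = G1 @ x # y # G3" using geq x_def y_def by simp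
  have cc: "set (G1 @ x # y # G3) \<subseteq> Ar C \<and> h \<noteq> [] \<and> set h \<subseteq> Ar C \<and>
     cod C x = dom C (hd h) \<and> dom C y = cod C (last h)"
    using c composable_W_iff[of C G1 x y G3 h] geq' ii by simp
  show "\<exists>!(\<beta>,\<gamma>). composable (W Q) \<beta> i \<gamma> \<and> \<alpha> = pcomp (W Q) \<beta> i \<gamma> \<and>
          W_op pA \<beta> = g \<and> W_op pA \<gamma> = h"
  proof (cases "length h = 1")
    case True
    then obtain u where hu: "h = [u]" by (cases h) auto
    have "\<exists>!(\<beta>,\<gamma>). composable (W Q) \<beta> (Suc (length G1)) \<gamma> \<and>
           \<alpha> = splice_comp Q \<beta> (Suc (length G1)) \<gamma> \<and> map pA \<beta> = G1 @ x # y # G3 \<and> map pA \<gamma> = [u]"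
      apply (rule core1[OF F U \<alpha>s])
      using cc hu e' geq' ii splice1[of C G1 x y G3 u] by auto
    then show ?thesis using hu geq' ii by (simp add: W_def W_op_def)
  next
    case False
    define u where "u = hd h"
    define v where "v = last h"
    define UU where "UU = butlast (tl h)"
    have hu: "h = u # UU @ [v]"
    proof -
      from cc False obtain a t where "h = a # t" "t \<noteq> []" by (cases h) auto
      then show ?thesis by (simp add: u_def v_def UU_def)
    qed
    have "\<exists>!(\<beta>,\<gamma>). composable (W Q) \<beta> (Suc (length G1)) \<gamma> \<and>
           \<alpha> = splice_comp Q \<beta> (Suc (length G1)) \<gamma> \<and> map pA \<beta> = G1 @ x # y # G3 \<and>
           map pA \<gamma> = u # UU @ [v]"
      apply (rule core2[OF F U \<alpha>s])
      using cc hu e' geq' ii splice2[of C G1 x y G3 u UU v] by (auto simp del: append_Cons)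
    then show ?thesis using hu geq' ii by (simp add: W_def W_op_def)
  qed
qed

lemma fin_part:
  assumes "functor_finitary Q C pO pA"
  shows "operad_functor_finitary (W Q) (W C) (W_col pO) (W_op pA)"
  unfolding operad_functor_finitary_def
proof (intro conjI ballI)
  fix c assume "c \<in> Col (W C)"
  then obtain X Y where c: "c = (X,Y)" "X \<in> Ob C" "Y \<in> Ob C" by (auto simp: W_def)
  have "{d \<in> Col (W Q). W_col pO d = c} \<subseteq> {q\<in>Ob Q. pO q = X} \<times> {q\<in>Ob Q. pO q = Y}"
    using c by (auto simp: W_def W_col_def)
  moreover have "finite ({q\<in>Ob Q. pO q = X} \<times> {q\<in>Ob Q. pO q = Y})"
    using assms c by (simp add: functor_finitary_def)
  ultimately show "finite {d \<in> Col (W Q). W_col pO d = c}" by (rule finite_subset)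
next
  fix w assume "w \<in> Ops (W C)"
  then have w: "set w \<subseteq> Ar C" by (simp add: W_def)
  define A where "A = (\<Union>f\<in>set w. {g\<in>Ar Q. pA g = f})"
  have fA: "finite A" unfolding A_def using assms w by (auto simp: functor_finitary_def)
  have "{x \<in> Ops (W Q). W_op pA x = w} \<subseteq> {xs. set xs \<subseteq> A \<and> length xs = length w}"
    by (auto simp: W_def W_op_def A_def)
  moreover have "finite {xs. set xs \<subseteq> A \<and> length xs = length w}"
    using fA by (rule finite_lists_length_eq)
  ultimately show "finite {x \<in> Ops (W Q). W_op pA x = w}" by (rule finite_subset)
qed

theorem mainTheorem5:
  fixes Q :: "('o1,'a1) cat" and C :: "('o2,'a2) cat"
    and pO :: "'o1 \<Rightarrow> 'o2" and pA :: "'a1 \<Rightarrow> 'a2"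
  assumes "is_functor Q C pO pA"
  shows "(functor_ULF Q C pA \<longrightarrow> operad_functor_ULF (W Q) (W C) (W_op pA))
       \<and> (functor_finitary Q C pO pA \<longrightarrow> operad_functor_finitary (W Q) (W C) (W_col pO) (W_op pA))"
  using ulf_part[OF assms] fin_part by blast

end
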